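(* Consider online bilateral trade with one seller of fixed unknown cost $c\in[0,1]$ and one buyer of fixed unknown value $v\in[0,1]$, where $v>c$, over $T$ rounds. Run the following algorithm (Optimistic-Binary-Search), which posts a single price each round. Maintain numbers $\ell_t,u_t$ with $\ell_1=0$, $u_1=1$. In round $t$ (exploration phase) post the single price $p_t=(\ell_t+u_t)/2$ to both traders. If both traders accept, the algorithm posts this same price $p_t$ in every remaining round (exploitation phase). If the seller rejects, set $\ell_{t+1}=p_t$, $u_{t+1}=u_t$; otherwise (the buyer rejects) set $\ell_{t+1}=\ell_t$, $u_{t+1}=p_t$. Then the cumulative gains-from-trade regret of this algorithm is at most $1$, for every $T$.
   Context: Trading model: in each round a price is posted; the seller accepts a price $p$ iff $p\ge c$ and the buyer accepts a price $p$ iff $p\le v$ (ties are broken in favour of accepting). A trade occurs iff both accept, producing gains-from-trade $v-c$; otherwise the gains-from-trade of the round is $0$. The benchmark is the optimal per-round gains-from-trade $v-c$, and the cumulative regret is $\sum_{t=1}^T\big((v-c)-\mathrm{GFT}_t\big)$, where $\mathrm{GFT}_t$ is the gains-from-trade realized in round $t$. *)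

theory Defs
  imports "HOL-Analysis.Analysis"
begin

definition seller_accepts :: "real \<Rightarrow> real \<Rightarrow> bool" where
  "seller_accepts c p \<longleftrightarrow> c \<le> p"

definition buyer_accepts :: "real \<Rightarrow> real \<Rightarrow> bool" where
  "buyer_accepts v p \<longleftrightarrow> p \<le> v"

definition gft :: "real \<Rightarrow> real \<Rightarrow> real \<Rightarrow> real" where
  "gft c v p = (if seller_accepts c p \<and> buyer_accepts v p then v - c else 0)"

text \<open>State of Optimistic-Binary-Search at the start of a round:
  (l, u, phase) where phase = None means exploration,
  phase = Some p means exploitation with fixed price p.\<close>
type_synonym obs_state = "real \<times> real \<times> real option"

definition obs_price :: "obs_state \<Rightarrow> real" where
  "obs_price s = (case s of (l, u, None) \<Rightarrow> (l + u) / 2 | (_, _, Some p) \<Rightarrow> p)"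

definition obs_step :: "real \<Rightarrow> real \<Rightarrow> obs_state \<Rightarrow> obs_state" where
  "obs_step c v s = (case s of
      (l, u, Some p) \<Rightarrow> (l, u, Some p)
    | (l, u, None) \<Rightarrow>
        (let p = (l + u) / 2 in
         if seller_accepts c p \<and> buyer_accepts v p then (l, u, Some p)
         else if \<not> seller_accepts c p then (p, u, None)
         else (l, p, None)))"

text \<open>State at the start of round t+1 (rounds indexed from 0 here; state 0 is round 1).\<close>
fun obs_state :: "real \<Rightarrow> real \<Rightarrow> nat \<Rightarrow> obs_state" where
  "obs_state c v 0 = (0, 1, None)"
| "obs_state c v (Suc t) = obs_step c v (obs_state c v t)"

definition obs_posted_price :: "real \<Rightarrow> real \<Rightarrow> nat \<Rightarrow> real" where
  "obs_posted_price c v t = obs_price (obs_state c v t)"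

definition obs_regret :: "real \<Rightarrow> real \<Rightarrow> nat \<Rightarrow> real" where
  "obs_regret c v T = (\<Sum>t<T. (v - c) - gft c v (obs_posted_price c v t))"

end

theory Submission
  imports Defs
begin

lemma nat_le_pow2: "real t \<le> 2 ^ t"
proof (induction t)
  case (Suc t)
  have "(1::real) \<le> 2 ^ t" by simp
  then have "real t + 1 \<le> 2 ^ t + 2 ^ t" using Suc.IH by linarith
  then show ?case by simp
qed simp

lemma regret_Suc:
  "obs_regret c v (Suc t) = obs_regret c v t + ((v - c) - gft c v (obs_posted_price c v t))"
  unfolding obs_regret_def by simp

definition inv :: "real \<Rightarrow> real \<Rightarrow> nat \<Rightarrow> bool" where
  "inv c v t = (case obs_state c v t of
      (l, u, None) \<Rightarrow> l \<le> c \<and> v \<le> u \<and> u - l = 1 / 2 ^ t \<and> obs_regret c v t = t * (v - c)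
    | (l, u, Some p) \<Rightarrow> c \<le> p \<and> p \<le> v \<and> obs_regret c v t \<le> 1)"

lemma inv_all:
  assumes "0 \<le> c" "c \<le> 1" "0 \<le> v" "v \<le> 1" "c < v"
  shows "inv c v t"
proof (induction t)
  case 0
  then show ?case using assms by (simp add: inv_def obs_regret_def)
next
  case (Suc t)
  obtain l u ph where st: "obs_state c v t = (l, u, ph)" by (cases "obs_state c v t") auto
  show ?case
  proof (cases ph)
    case (Some p)
    with Suc st show ?thesis
      by (simp add: inv_def obs_step_def regret_Suc obs_posted_price_def obs_price_def gft_def
          seller_accepts_def buyer_accepts_def)
  next
    case None
    define p where "p = (l + u) / 2"
    from Suc st None have I: "l \<le> c" "v \<le> u" "u - l = 1 / 2 ^ t" "obs_regret c v t = t * (v - c)"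
      by (auto simp: inv_def)
    have pr: "obs_posted_price c v t = p" using st None by (simp add: obs_posted_price_def obs_price_def p_def)
    show ?thesis
    proof (cases "c \<le> p \<and> p \<le> v")
      case True
      have "real t * (v - c) \<le> real t * (1 / 2 ^ t)"
        using I by (intro mult_left_mono) auto
      also have "\<dots> \<le> 1" using nat_le_pow2[of t] by (simp add: field_simps)
      finally have "obs_regret c v t \<le> 1" using I by simp
      moreover have "obs_state c v (Suc t) = (l, u, Some p)"
        using True st None by (simp add: obs_step_def seller_accepts_def buyer_accepts_def Let_def p_def)
      moreover have "gft c v p = v - c" using True by (simp add: gft_def seller_accepts_def buyer_accepts_def)
      ultimately show ?thesis using True pr
        by (simp add: inv_def regret_Suc)
    next
      case False
      have g: "gft c v p = 0" using False by (auto simp: gft_def seller_accepts_def buyer_accepts_def)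
      show ?thesis
      proof (cases "c \<le> p")
        case True
        then have "v < p" using False by simp
        then show ?thesis using True st None pr I g
          by (simp add: inv_def obs_step_def regret_Suc seller_accepts_def buyer_accepts_def
              Let_def p_def[symmetric]) (simp add: p_def field_simps)
      next
        case F: False
        then show ?thesis using st None pr I g
          by (simp add: inv_def obs_step_def regret_Suc seller_accepts_def buyer_accepts_def
              Let_def p_def[symmetric]) (simp add: p_def field_simps)
      qed
    qed
  qed
qed

theorem theorem3p1:
  fixes c v :: real and T :: nat
  assumes "0 \<le> c" and "c \<le> 1" and "0 \<le> v" and "v \<le> 1" and "c < v"
  shows "obs_regret c v T \<le> 1"
proof -
  have I: "inv c v T" using inv_all assms by blast
  obtain l u ph where st: "obs_state c v T = (l, u, ph)" by (cases "obs_state c v T") auto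
  show ?thesis
  proof (cases ph)
    case None
    with I st have "u - l = 1 / 2 ^ T" "obs_regret c v T = T * (v - c)" "l \<le> c" "v \<le> u"
      by (auto simp: inv_def)
    moreover have "real T * (v - c) \<le> real T * (1 / 2 ^ T)"
      using calculation by (intro mult_left_mono) auto
    moreover have "real T * (1 / 2 ^ T) \<le> 1" using nat_le_pow2[of T] by (simp add: field_simps)
    ultimately show ?thesis by linarith
  next
    case (Some p)
    with I st show ?thesis by (auto simp: inv_def)
  qed
qed

end
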